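(* Let $(G,v)$ be a Hamel space over an ordered field $C$. Then $v(G\setminus\{0\})$ is a $C$-linearly independent subset of $G$.
   Context: Let $C$ be an ordered field. A $2$-ordered $C$-vector space is a $C$-vector space $G$ with two total orderings $<_0,<_1$ such that $G$ is an ordered $C$-vector space with respect to each. Put $G_\infty=G\cup\{\infty\}$, with $G<_0\infty$, $G<_1\infty$. A Hamel valuation on $G$ is a map $v:G\to G_\infty$ such that for all $x,y\in G$ and $\lambda\in C^{\times}$: $v(x)=\infty$ iff $x=0$; $v(x+y)\ge_0\min_0(v(x),v(y))$; $v(\lambda x)=v(x)$; if $0<_1x<_1y$ then $v(x)\ge_0v(y)$; $v(v(x))=v(x)$ (with $v(\infty)=\infty$); and $v(x)>_10$. A Hamel space is such a pair $(G,v)$. *)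

theory Defs
  imports Main "HOL.Vector_Spaces"
begin

definition total_order_rel :: "('g \<Rightarrow> 'g \<Rightarrow> bool) \<Rightarrow> bool" where
  "total_order_rel le \<longleftrightarrow>
     (\<forall>x. le x x) \<and> (\<forall>x y. le x y \<and> le y x \<longrightarrow> x = y) \<and>
     (\<forall>x y z. le x y \<and> le y z \<longrightarrow> le x z) \<and> (\<forall>x y. le x y \<or> le y x)"

definition ordered_vs ::
  "('c::linordered_field \<Rightarrow> 'g::ab_group_add \<Rightarrow> 'g) \<Rightarrow> ('g \<Rightarrow> 'g \<Rightarrow> bool) \<Rightarrow> bool" where
  "ordered_vs scale le \<longleftrightarrow> vector_space scale \<and> total_order_rel le \<and>
     (\<forall>x y z. le x y \<longrightarrow> le (x + z) (y + z)) \<and>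
     (\<forall>c x y. 0 < c \<and> le x y \<longrightarrow> le (scale c x) (scale c y))"

definition two_ordered_vs ::
  "('c::linordered_field \<Rightarrow> 'g::ab_group_add \<Rightarrow> 'g) \<Rightarrow> ('g \<Rightarrow> 'g \<Rightarrow> bool) \<Rightarrow> ('g \<Rightarrow> 'g \<Rightarrow> bool) \<Rightarrow> bool" where
  "two_ordered_vs scale le0 le1 \<longleftrightarrow> ordered_vs scale le0 \<and> ordered_vs scale le1"

text \<open>G_infinity = 'g option, with None playing the role of infinity (the top element).\<close>
definition ext_le :: "('g \<Rightarrow> 'g \<Rightarrow> bool) \<Rightarrow> 'g option \<Rightarrow> 'g option \<Rightarrow> bool" where
  "ext_le le a b = (case b of None \<Rightarrow> True
                    | Some y \<Rightarrow> (case a of None \<Rightarrow> False | Some x \<Rightarrow> le x y))"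

definition ext_lt :: "('g \<Rightarrow> 'g \<Rightarrow> bool) \<Rightarrow> 'g option \<Rightarrow> 'g option \<Rightarrow> bool" where
  "ext_lt le a b \<longleftrightarrow> ext_le le a b \<and> a \<noteq> b"

definition ext_min :: "('g \<Rightarrow> 'g \<Rightarrow> bool) \<Rightarrow> 'g option \<Rightarrow> 'g option \<Rightarrow> 'g option" where
  "ext_min le a b = (if ext_le le a b then a else b)"

definition ext_v :: "('g \<Rightarrow> 'g option) \<Rightarrow> 'g option \<Rightarrow> 'g option" where
  "ext_v v a = (case a of None \<Rightarrow> None | Some g \<Rightarrow> v g)"

definition hamel_valuation ::
  "('c::linordered_field \<Rightarrow> 'g::ab_group_add \<Rightarrow> 'g) \<Rightarrow> ('g \<Rightarrow> 'g \<Rightarrow> bool) \<Rightarrow> ('g \<Rightarrow> 'g \<Rightarrow> bool)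
     \<Rightarrow> ('g \<Rightarrow> 'g option) \<Rightarrow> bool" where
  "hamel_valuation scale le0 le1 v \<longleftrightarrow>
     (\<forall>x. v x = None \<longleftrightarrow> x = 0) \<and>
     (\<forall>x y. ext_le le0 (ext_min le0 (v x) (v y)) (v (x + y))) \<and>
     (\<forall>c x. c \<noteq> 0 \<longrightarrow> v (scale c x) = v x) \<and>
     (\<forall>x y. le1 0 x \<and> x \<noteq> 0 \<and> le1 x y \<and> x \<noteq> y \<longrightarrow> ext_le le0 (v y) (v x)) \<and>
     (\<forall>x. ext_v v (v x) = v x) \<and>
     (\<forall>x. ext_lt le1 (Some 0) (v x))"

definition hamel_space ::
  "('c::linordered_field \<Rightarrow> 'g::ab_group_add \<Rightarrow> 'g) \<Rightarrow> ('g \<Rightarrow> 'g \<Rightarrow> bool) \<Rightarrow> ('g \<Rightarrow> 'g \<Rightarrow> bool)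
     \<Rightarrow> ('g \<Rightarrow> 'g option) \<Rightarrow> bool" where
  "hamel_space scale le0 le1 v \<longleftrightarrow> two_ordered_vs scale le0 le1 \<and> hamel_valuation scale le0 le1 v"

end

theory Submission
  imports Defs
begin

lemma strict_ultra:
  fixes scale :: "'c::linordered_field \<Rightarrow> 'g::ab_group_add \<Rightarrow> 'g"
  assumes H: "hamel_space scale le0 le1 v"
    and va: "v a = Some p" and vb: "v b = Some q" and pq: "le0 p q" "p \<noteq> q"
  shows "v (a + b) = Some p"
proof -
  from H have vs: "vector_space scale" and tot: "total_order_rel le0"
    and hv: "hamel_valuation scale le0 le1 v"
    unfolding hamel_space_def two_ordered_vs_def ordered_vs_def by auto
  interpret vector_space scale by (rule vs)
  have N: "\<And>x. v x = None \<longleftrightarrow> x = 0" and U: "\<And>x y. ext_le le0 (ext_min le0 (v x) (v y)) (v (x + y))"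
    and Sc: "\<And>c x. c \<noteq> 0 \<Longrightarrow> v (scale c x) = v x"
    using hv unfolding hamel_valuation_def by auto
  have vmb: "v (- b) = Some q"
    using Sc[of "-1" b] vb by simp
  have u1: "ext_le le0 (Some p) (v (a + b))"
    using U[of a b] by (simp add: va vb pq ext_min_def ext_le_def)
  show ?thesis
  proof (cases "v (a + b)")
    case None
    then have "a + b = 0" using N by auto
    then have "a = - b" by (simp add: eq_neg_iff_add_eq_0)
    then show ?thesis using va vmb pq by simp
  next
    case (Some r)
    with u1 have pr: "le0 p r" unfolding ext_le_def by simp
    have "ext_le le0 (ext_min le0 (v (a + b)) (v (- b))) (v (a + b + - b))" by (rule U)
    then have u2: "ext_le le0 (ext_min le0 (Some r) (Some q)) (Some p)"
      using Some vmb va by simp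
    show ?thesis
    proof (cases "le0 r q")
      case True
      then have "le0 r p" using u2 unfolding ext_min_def ext_le_def by simp
      then have "r = p" using pr tot unfolding total_order_rel_def by blast
      then show ?thesis using Some by simp
    next
      case False
      then have "le0 q p" using u2 unfolding ext_min_def ext_le_def by simp
      then show ?thesis using pq tot unfolding total_order_rel_def by blast
    qed
  qed
qed

theorem lemma4p3:
  fixes scale :: "'c::linordered_field \<Rightarrow> 'g::ab_group_add \<Rightarrow> 'g"
    and le0 le1 :: "'g \<Rightarrow> 'g \<Rightarrow> bool"
    and v :: "'g \<Rightarrow> 'g option"
  assumes "hamel_space scale le0 le1 v"
  shows "\<not> module.dependent scale {g. \<exists>x. x \<noteq> 0 \<and> v x = Some g}"
proof
  let ?S = "{g. \<exists>x. x \<noteq> 0 \<and> v x = Some g}"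
  from assms have vs: "vector_space scale" and tot: "total_order_rel le0"
    and hv: "hamel_valuation scale le0 le1 v"
    unfolding hamel_space_def two_ordered_vs_def ordered_vs_def by auto
  interpret vector_space scale by (rule vs)
  have N: "\<And>x. v x = None \<longleftrightarrow> x = 0"
    and Sc: "\<And>c x. c \<noteq> 0 \<Longrightarrow> v (scale c x) = v x"
    and Id: "\<And>x. ext_v v (v x) = v x"
    using hv unfolding hamel_valuation_def by auto
  have fixv: "v g = Some g" if "g \<in> ?S" for g
  proof -
    from that obtain x where "v x = Some g" by auto
    with Id[of x] show ?thesis unfolding ext_v_def by simp
  qed
  have key: "T \<subseteq> ?S \<Longrightarrow> (\<forall>g\<in>T. u g \<noteq> 0) \<Longrightarrow>
      \<exists>g\<in>T. v (\<Sum>w\<in>T. scale (u w) w) = Some g \<and> (\<forall>h\<in>T. le0 g h)"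
    if "finite T" "T \<noteq> {}" for T and u :: "'g \<Rightarrow> 'c"
    using that
  proof (induction T rule: finite_ne_induct)
    case (singleton x)
    have "le0 x x" using tot unfolding total_order_rel_def by blast
    moreover have "x \<in> ?S" using singleton by simp
    ultimately show ?case using fixv[of x] Sc[of "u x" x] singleton by simp
  next
    case (insert x F)
    then obtain g where g: "g \<in> F" "v (\<Sum>w\<in>F. scale (u w) w) = Some g" "\<forall>h\<in>F. le0 g h"
      by auto
    have vx: "v (scale (u x) x) = Some x" using insert fixv[of x] Sc[of "u x" x] by auto
    have xg: "x \<noteq> g" using insert g by auto
    have sum: "(\<Sum>w\<in>insert x F. scale (u w) w) = scale (u x) x + (\<Sum>w\<in>F. scale (u w) w)"
      using insert by simp
    show ?case
    proof (cases "le0 x g")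
      case True
      have "v (scale (u x) x + (\<Sum>w\<in>F. scale (u w) w)) = Some x"
        by (rule strict_ultra[OF assms vx g(2) True xg])
      moreover have "\<forall>h\<in>insert x F. le0 x h"
        using True g(3) tot unfolding total_order_rel_def by blast
      ultimately show ?thesis using sum by auto
    next
      case False
      then have gx: "le0 g x" using tot unfolding total_order_rel_def by blast
      have "v ((\<Sum>w\<in>F. scale (u w) w) + scale (u x) x) = Some g"
        by (rule strict_ultra[OF assms g(2) vx gx]) (use xg in auto)
      moreover have "\<forall>h\<in>insert x F. le0 g h"
        using gx g(3) by blast
      ultimately show ?thesis using sum g(1) by (auto simp: add.commute)
    qed
  qed
  assume "module.dependent scale ?S"
  then obtain t u where t: "finite t" "t \<subseteq> ?S" "(\<Sum>w\<in>t. scale (u w) w) = 0" "\<exists>w\<in>t. u w \<noteq> 0"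
    unfolding dependent_explicit by blast
  let ?T = "{w\<in>t. u w \<noteq> 0}"
  have "(\<Sum>w\<in>t. scale (u w) w) = (\<Sum>w\<in>?T. scale (u w) w)"
    using t(1) by (intro sum.mono_neutral_right) auto
  with t have z: "(\<Sum>w\<in>?T. scale (u w) w) = 0" by simp
  have "\<exists>g\<in>?T. v (\<Sum>w\<in>?T. scale (u w) w) = Some g \<and> (\<forall>h\<in>?T. le0 g h)"
    using t by (intro key) auto
  with z N[of 0] show False by auto
qed

end
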